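(* Let $S$ be an entropy function for a finite set $X$. Given functions $\mu,\nu:2^X\to[0,\infty)$, there exist functions $\mu',\nu':2^X\to[0,\infty)$ with non-overlapping supports (i.e. $\mu'(A)>0$ and $\nu'(B)>0$ imply $A\cap B=\emptyset$) such that $\phi_{\mu'}-\phi_{\nu'}=\phi_\mu-\phi_\nu$ and \[\sum_{A\subseteq X}(\mu'(A)+\nu'(A))S(A)\le\sum_{A\subseteq X}(\mu(A)+\nu(A))S(A).\]
   Context: An entropy function for a finite set $X$ is a function $S:2^X\to[0,\infty)$ with $S(\emptyset)=0$, $S(A)+S(B)\ge S(A\cap B)+S(A\cup B)$ and $S(A)+S(B)\ge S(A\setminus B)+S(B\setminus A)$ for all $A,B\subseteq X$. For $\mu:2^X\to\mathbb R$, $\phi_\mu:X\to\mathbb R$ is defined by $\phi_\mu(x):=\sum_{A\ni x}\mu(A)$. *)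

theory Defs
  imports Complex_Main
begin

definition entropy_function :: "'a set \<Rightarrow> ('a set \<Rightarrow> real) \<Rightarrow> bool" where
  "entropy_function X S \<longleftrightarrow>
     (\<forall>A\<subseteq>X. S A \<ge> 0) \<and> S {} = 0 \<and>
     (\<forall>A\<subseteq>X. \<forall>B\<subseteq>X. S A + S B \<ge> S (A \<inter> B) + S (A \<union> B)) \<and>
     (\<forall>A\<subseteq>X. \<forall>B\<subseteq>X. S A + S B \<ge> S (A - B) + S (B - A))"

definition phi :: "'a set \<Rightarrow> ('a set \<Rightarrow> real) \<Rightarrow> 'a \<Rightarrow> real" where
  "phi X \<mu> x = (\<Sum>A\<in>{A. A \<subseteq> X \<and> x \<in> A}. \<mu> A)"

end

theory Submission
  imports Defs
begin

definition cov :: "'a set \<Rightarrow> ('a set \<Rightarrow> real) \<Rightarrow> 'a \<Rightarrow> bool" where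
  "cov X f y \<longleftrightarrow> (\<exists>C\<subseteq>X. y \<in> C \<and> f C > 0)"

definition cost :: "'a set \<Rightarrow> ('a set \<Rightarrow> real) \<Rightarrow> ('a set \<Rightarrow> real) \<Rightarrow> ('a set \<Rightarrow> real) \<Rightarrow> real" where
  "cost X S f g = (\<Sum>A\<in>Pow X. (f A + g A) * S A)"

definition cnt :: "'a set \<Rightarrow> 'a \<Rightarrow> ('a set \<Rightarrow> real) \<Rightarrow> nat" where
  "cnt X x f = card {C \<in> Pow X. x \<in> C \<and> f C > 0}"

definition invr where
  "invr X S \<mu> \<nu> \<mu>' \<nu>' Y \<longleftrightarrow> (\<forall>A\<subseteq>X. \<mu>' A \<ge> 0) \<and> (\<forall>A\<subseteq>X. \<nu>' A \<ge> 0) \<and>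
     (\<forall>x. phi X \<mu>' x - phi X \<nu>' x = phi X \<mu> x - phi X \<nu> x) \<and>
     cost X S \<mu>' \<nu>' \<le> cost X S \<mu> \<nu> \<and> (\<forall>y\<in>Y. \<not> (cov X \<mu>' y \<and> cov X \<nu>' y))"

lemma sum_shift:
  assumes "finite F"
  shows "(\<Sum>C\<in>F. g C - (if C = A then t else 0) + (if C = D then t else 0))
    = sum g F - (if A \<in> F then t else 0) + (if D \<in> F then (t::real) else 0)"
  using assms by (simp add: sum.distrib sum_subtractf sum.delta')

lemma sum_shift_w:
  assumes "finite F" "A \<in> F" "D \<in> F"
  shows "(\<Sum>C\<in>F. (g C - (if C = A then t else 0) + (if C = D then t else 0)) * w C)
    = (\<Sum>C\<in>F. g C * w C) - t * w A + (t::real) * w D"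
proof -
  have "(\<Sum>C\<in>F. (g C - (if C = A then t else 0) + (if C = D then t else 0)) * w C)
     = (\<Sum>C\<in>F. g C * w C - (if C = A then t * w A else 0) + (if C = D then t * w D else 0))"
    by (rule sum.cong) (auto simp: algebra_simps)
  also have "\<dots> = (\<Sum>C\<in>F. g C * w C) - t * w A + t * w D"
    using assms by (simp add: sum.distrib sum_subtractf sum.delta')
  finally show ?thesis .
qed

lemma step:
  fixes X :: "'a set" and S \<mu> \<nu> :: "'a set \<Rightarrow> real"
  assumes fin: "finite X" and ent: "entropy_function X S"
    and nm: "\<forall>A\<subseteq>X. \<mu> A \<ge> 0" and nn: "\<forall>A\<subseteq>X. \<nu> A \<ge> 0"
    and AX: "A \<subseteq> X" and BX: "B \<subseteq> X" and xA: "x \<in> A" and xB: "x \<in> B"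
    and mA: "\<mu> A > 0" and nB: "\<nu> B > 0"
  defines "t \<equiv> min (\<mu> A) (\<nu> B)"
  defines "\<mu>1 \<equiv> (\<lambda>C. \<mu> C - (if C = A then t else 0) + (if C = A - B then t else 0))"
  defines "\<nu>1 \<equiv> (\<lambda>C. \<nu> C - (if C = B then t else 0) + (if C = B - A then t else 0))"
  shows "(\<forall>A\<subseteq>X. \<mu>1 A \<ge> 0) \<and> (\<forall>A\<subseteq>X. \<nu>1 A \<ge> 0) \<and>
     (\<forall>y. phi X \<mu>1 y - phi X \<nu>1 y = phi X \<mu> y - phi X \<nu> y) \<and>
     cost X S \<mu>1 \<nu>1 \<le> cost X S \<mu> \<nu> \<and>
     (\<forall>y. cov X \<mu>1 y \<longrightarrow> cov X \<mu> y) \<and> (\<forall>y. cov X \<nu>1 y \<longrightarrow> cov X \<nu> y) \<and>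
     cnt X x \<mu>1 + cnt X x \<nu>1 < cnt X x \<mu> + cnt X x \<nu>"
proof -
  have tpos: "t > 0" using mA nB by (simp add: t_def)
  have tA: "t \<le> \<mu> A" and tB: "t \<le> \<nu> B" by (auto simp: t_def)
  have AB: "A \<noteq> A - B" "B \<noteq> B - A" using xA xB by auto
  have n1: "\<forall>C\<subseteq>X. \<mu>1 C \<ge> 0"
    using nm tA tpos AB by (auto simp: \<mu>1_def)
  have n2: "\<forall>C\<subseteq>X. \<nu>1 C \<ge> 0"
    using nn tB tpos AB by (auto simp: \<nu>1_def)
  have finF: "finite {C. C \<subseteq> X \<and> y \<in> C}" for y using fin by auto
  have p1: "phi X \<mu>1 y = phi X \<mu> y - (if y \<in> A then t else 0) + (if y \<in> A - B then t else 0)" for y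
    unfolding phi_def \<mu>1_def using sum_shift[OF finF[of y], of \<mu> A t "A - B"] AX by auto
  have p2: "phi X \<nu>1 y = phi X \<nu> y - (if y \<in> B then t else 0) + (if y \<in> B - A then t else 0)" for y
    unfolding phi_def \<nu>1_def using sum_shift[OF finF[of y], of \<nu> B t "B - A"] BX by auto
  have ph: "\<forall>y. phi X \<mu>1 y - phi X \<nu>1 y = phi X \<mu> y - phi X \<nu> y"
    by (auto simp: p1 p2)
  have c1: "cost X S \<mu>1 \<nu>1 = (\<Sum>C\<in>Pow X. \<mu>1 C * S C) + (\<Sum>C\<in>Pow X. \<nu>1 C * S C)"
    by (simp add: cost_def distrib_right sum.distrib)
  have c0: "cost X S \<mu> \<nu> = (\<Sum>C\<in>Pow X. \<mu> C * S C) + (\<Sum>C\<in>Pow X. \<nu> C * S C)"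
    by (simp add: cost_def distrib_right sum.distrib)
  have s1: "(\<Sum>C\<in>Pow X. \<mu>1 C * S C) = (\<Sum>C\<in>Pow X. \<mu> C * S C) - t * S A + t * S (A - B)"
    unfolding \<mu>1_def using sum_shift_w[of "Pow X" A "A - B" \<mu> t S] fin AX by auto
  have s2: "(\<Sum>C\<in>Pow X. \<nu>1 C * S C) = (\<Sum>C\<in>Pow X. \<nu> C * S C) - t * S B + t * S (B - A)"
    unfolding \<nu>1_def using sum_shift_w[of "Pow X" B "B - A" \<nu> t S] fin BX by auto
  have ineq: "S A + S B \<ge> S (A - B) + S (B - A)"
    using ent AX BX unfolding entropy_function_def by blast
  have "t * (S (A - B) + S (B - A)) \<le> t * (S A + S B)"
    using ineq tpos by (intro mult_left_mono) auto
  then have cst: "cost X S \<mu>1 \<nu>1 \<le> cost X S \<mu> \<nu>"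
    unfolding c1 c0 s1 s2 by (simp add: algebra_simps)
  have cv1: "\<forall>y. cov X \<mu>1 y \<longrightarrow> cov X \<mu> y"
  proof (intro allI impI)
    fix y assume "cov X \<mu>1 y"
    then obtain C where C: "C \<subseteq> X" "y \<in> C" "\<mu>1 C > 0" by (auto simp: cov_def)
    show "cov X \<mu> y"
    proof (cases "C = A - B")
      case True
      then show ?thesis using C AX mA by (auto simp: cov_def)
    next
      case False
      then have "\<mu> C > 0" using C tpos by (auto simp: \<mu>1_def split: if_splits)
      then show ?thesis using C by (auto simp: cov_def)
    qed
  qed
  have cv2: "\<forall>y. cov X \<nu>1 y \<longrightarrow> cov X \<nu> y"
  proof (intro allI impI)
    fix y assume "cov X \<nu>1 y"
    then obtain C where C: "C \<subseteq> X" "y \<in> C" "\<nu>1 C > 0" by (auto simp: cov_def)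
    show "cov X \<nu> y"
    proof (cases "C = B - A")
      case True
      then show ?thesis using C BX nB by (auto simp: cov_def)
    next
      case False
      then have "\<nu> C > 0" using C tpos by (auto simp: \<nu>1_def split: if_splits)
      then show ?thesis using C by (auto simp: cov_def)
    qed
  qed
  have sub1: "{C \<in> Pow X. x \<in> C \<and> \<mu>1 C > 0} \<subseteq> {C \<in> Pow X. x \<in> C \<and> \<mu> C > 0}"
    using tpos xB by (auto simp: \<mu>1_def split: if_splits)
  have sub2: "{C \<in> Pow X. x \<in> C \<and> \<nu>1 C > 0} \<subseteq> {C \<in> Pow X. x \<in> C \<and> \<nu> C > 0}"
    using tpos xA by (auto simp: \<nu>1_def split: if_splits)
  have fin1: "finite {C \<in> Pow X. x \<in> C \<and> \<mu> C > 0}" "finite {C \<in> Pow X. x \<in> C \<and> \<nu> C > 0}"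
    using fin by auto
  have le1: "cnt X x \<mu>1 \<le> cnt X x \<mu>" "cnt X x \<nu>1 \<le> cnt X x \<nu>"
    unfolding cnt_def using card_mono[OF fin1(1) sub1] card_mono[OF fin1(2) sub2] by auto
  have "t = \<mu> A \<or> t = \<nu> B" by (auto simp: t_def min_def)
  then have "cnt X x \<mu>1 < cnt X x \<mu> \<or> cnt X x \<nu>1 < cnt X x \<nu>"
  proof
    assume "t = \<mu> A"
    moreover have "\<mu>1 A = \<mu> A - t" using AB unfolding \<mu>1_def by simp
    ultimately have "\<mu>1 A = 0" by linarith
    then have a1: "A \<notin> {C \<in> Pow X. x \<in> C \<and> \<mu>1 C > 0}" by simp
    have a2: "A \<in> {C \<in> Pow X. x \<in> C \<and> \<mu> C > 0}" using AX xA mA by simp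
    have "{C \<in> Pow X. x \<in> C \<and> \<mu>1 C > 0} \<subset> {C \<in> Pow X. x \<in> C \<and> \<mu> C > 0}"
      using sub1 a1 a2 by blast
    then show ?thesis unfolding cnt_def using psubset_card_mono[OF fin1(1)] by auto
  next
    assume "t = \<nu> B"
    moreover have "\<nu>1 B = \<nu> B - t" using AB unfolding \<nu>1_def by simp
    ultimately have "\<nu>1 B = 0" by linarith
    then have a1: "B \<notin> {C \<in> Pow X. x \<in> C \<and> \<nu>1 C > 0}" by simp
    have a2: "B \<in> {C \<in> Pow X. x \<in> C \<and> \<nu> C > 0}" using BX xB nB by simp
    have "{C \<in> Pow X. x \<in> C \<and> \<nu>1 C > 0} \<subset> {C \<in> Pow X. x \<in> C \<and> \<nu> C > 0}"
      using sub2 a1 a2 by blast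
    then show ?thesis unfolding cnt_def using psubset_card_mono[OF fin1(2)] by auto
  qed
  with le1 have lt: "cnt X x \<mu>1 + cnt X x \<nu>1 < cnt X x \<mu> + cnt X x \<nu>" by linarith
  show ?thesis by (intro conjI n1 n2 ph cst cv1 cv2 lt)
qed

lemma resolve:
  assumes fin: "finite X" and ent: "entropy_function X S"
  shows "invr X S \<mu> \<nu> \<mu>' \<nu>' Y \<Longrightarrow> \<exists>\<mu>'' \<nu>''. invr X S \<mu> \<nu> \<mu>'' \<nu>'' (insert x Y)"
proof (induction "cnt X x \<mu>' + cnt X x \<nu>'" arbitrary: \<mu>' \<nu>' rule: less_induct)
  case less
  show ?case
  proof (cases "cov X \<mu>' x \<and> cov X \<nu>' x")
    case False
    have "invr X S \<mu> \<nu> \<mu>' \<nu>' (insert x Y)" using False less.prems unfolding invr_def by simp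
    then show ?thesis by blast
  next
    case True
    then obtain A B where AB: "A \<subseteq> X" "x \<in> A" "\<mu>' A > 0" "B \<subseteq> X" "x \<in> B" "\<nu>' B > 0"
      by (auto simp: cov_def)
    have nm: "\<forall>A\<subseteq>X. \<mu>' A \<ge> 0" and nn: "\<forall>A\<subseteq>X. \<nu>' A \<ge> 0"
      using less.prems by (auto simp: invr_def)
    define t where "t = min (\<mu>' A) (\<nu>' B)"
    define \<mu>1 where "\<mu>1 = (\<lambda>C. \<mu>' C - (if C = A then t else 0) + (if C = A - B then t else 0))"
    define \<nu>1 where "\<nu>1 = (\<lambda>C. \<nu>' C - (if C = B then t else 0) + (if C = B - A then t else 0))"
    have st: "(\<forall>A\<subseteq>X. \<mu>1 A \<ge> 0) \<and> (\<forall>A\<subseteq>X. \<nu>1 A \<ge> 0) \<and>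
     (\<forall>y. phi X \<mu>1 y - phi X \<nu>1 y = phi X \<mu>' y - phi X \<nu>' y) \<and>
     cost X S \<mu>1 \<nu>1 \<le> cost X S \<mu>' \<nu>' \<and>
     (\<forall>y. cov X \<mu>1 y \<longrightarrow> cov X \<mu>' y) \<and> (\<forall>y. cov X \<nu>1 y \<longrightarrow> cov X \<nu>' y) \<and>
     cnt X x \<mu>1 + cnt X x \<nu>1 < cnt X x \<mu>' + cnt X x \<nu>'"
      unfolding \<mu>1_def \<nu>1_def t_def
      by (rule step[OF fin ent nm nn AB(1) AB(4) AB(2) AB(5) AB(3) AB(6)])
    have I1: "invr X S \<mu> \<nu> \<mu>1 \<nu>1 Y"
    proof -
      have a: "\<forall>x. phi X \<mu>' x - phi X \<nu>' x = phi X \<mu> x - phi X \<nu> x"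
        "cost X S \<mu>' \<nu>' \<le> cost X S \<mu> \<nu>" "\<forall>y\<in>Y. \<not> (cov X \<mu>' y \<and> cov X \<nu>' y)"
        using less.prems unfolding invr_def by auto
      show ?thesis unfolding invr_def
      proof (intro conjI)
        show "\<forall>x. phi X \<mu>1 x - phi X \<nu>1 x = phi X \<mu> x - phi X \<nu> x" using st a(1) by simp
        show "cost X S \<mu>1 \<nu>1 \<le> cost X S \<mu> \<nu>" using st a(2) by linarith
        show "\<forall>y\<in>Y. \<not> (cov X \<mu>1 y \<and> cov X \<nu>1 y)" using st a(3) by blast
        show "\<forall>A\<subseteq>X. \<mu>1 A \<ge> 0" using st by (elim conjE)
        show "\<forall>A\<subseteq>X. \<nu>1 A \<ge> 0" using st by (elim conjE)
      qed
    qed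
    have lt: "cnt X x \<mu>1 + cnt X x \<nu>1 < cnt X x \<mu>' + cnt X x \<nu>'" using st by (elim conjE)
    show ?thesis by (rule less.hyps[OF lt I1])
  qed
qed

lemma resolve_all:
  assumes fin: "finite X" and ent: "entropy_function X S"
    and nm: "\<forall>A\<subseteq>X. \<mu> A \<ge> 0" and nn: "\<forall>A\<subseteq>X. \<nu> A \<ge> 0"
    and "finite Y"
  shows "\<exists>\<mu>' \<nu>'. invr X S \<mu> \<nu> \<mu>' \<nu>' Y"
  using \<open>finite Y\<close>
proof (induction Y rule: finite_induct)
  case empty
  have "invr X S \<mu> \<nu> \<mu> \<nu> {}" using nm nn by (auto simp: invr_def)
  then show ?case by blast
next
  case (insert x F)
  from insert.IH obtain \<mu>' \<nu>' where "invr X S \<mu> \<nu> \<mu>' \<nu>' F" by blast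
  from resolve[OF fin ent this] show ?case .
qed

theorem lemma30:
  fixes X :: "'a set" and S \<mu> \<nu> :: "'a set \<Rightarrow> real"
  assumes "finite X"
    and "entropy_function X S"
    and "\<forall>A\<subseteq>X. \<mu> A \<ge> 0"
    and "\<forall>A\<subseteq>X. \<nu> A \<ge> 0"
  shows "\<exists>\<mu>' \<nu>' :: 'a set \<Rightarrow> real.
           (\<forall>A\<subseteq>X. \<mu>' A \<ge> 0) \<and> (\<forall>A\<subseteq>X. \<nu>' A \<ge> 0) \<and>
           (\<forall>A\<subseteq>X. \<forall>B\<subseteq>X. \<mu>' A > 0 \<and> \<nu>' B > 0 \<longrightarrow> A \<inter> B = {}) \<and>
           (\<forall>x\<in>X. phi X \<mu>' x - phi X \<nu>' x = phi X \<mu> x - phi X \<nu> x) \<and>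
           (\<Sum>A\<in>Pow X. (\<mu>' A + \<nu>' A) * S A) \<le> (\<Sum>A\<in>Pow X. (\<mu> A + \<nu> A) * S A)"
proof -
  obtain \<mu>' \<nu>' where I: "invr X S \<mu> \<nu> \<mu>' \<nu>' X"
    using resolve_all[OF assms(1,2,3,4,1)] by blast
  have "\<forall>A\<subseteq>X. \<forall>B\<subseteq>X. \<mu>' A > 0 \<and> \<nu>' B > 0 \<longrightarrow> A \<inter> B = {}"
  proof (intro allI impI)
    fix A B assume AB: "A \<subseteq> X" "B \<subseteq> X" "\<mu>' A > 0 \<and> \<nu>' B > 0"
    show "A \<inter> B = {}"
    proof (rule ccontr)
      assume "A \<inter> B \<noteq> {}"
      then obtain y where "y \<in> A" "y \<in> B" by blast
      then have "cov X \<mu>' y" "cov X \<nu>' y" "y \<in> X" using AB by (auto simp: cov_def)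
      then show False using I by (auto simp: invr_def)
    qed
  qed
  moreover have "(\<forall>A\<subseteq>X. \<mu>' A \<ge> 0) \<and> (\<forall>A\<subseteq>X. \<nu>' A \<ge> 0) \<and>
     (\<forall>x\<in>X. phi X \<mu>' x - phi X \<nu>' x = phi X \<mu> x - phi X \<nu> x) \<and>
     (\<Sum>A\<in>Pow X. (\<mu>' A + \<nu>' A) * S A) \<le> (\<Sum>A\<in>Pow X. (\<mu> A + \<nu> A) * S A)"
    using I unfolding invr_def cost_def by simp
  ultimately show ?thesis by (intro exI[of _ \<mu>'] exI[of _ \<nu>']) simp
qed

end
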